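(* Let $k\ge1$, and let $a,b$ be integers with $b\ge1$, $0\le a\le b$ and $k\equiv a\pmod b$. Then $N\big((k+1+a-b)(k-a)/b,\;k\big)=(k-a)/b$.
   Context: For $n>k\ge1$, $N(n,k)$ is the nullity of the $n\times n$ skew-symmetric Toeplitz matrix $A(n,k)$ whose first $k$ superdiagonals have all entries $1$ and whose remaining superdiagonals have all entries $0$. This nullity depends only on $n\bmod (k^2+k)$, and $N(n,k)$ is defined for every integer $n$ as $N(n',k)$ for any $n'>k$ with $n'\equiv n\pmod{k^2+k}$. *)

theory Defs
  imports "Jordan_Normal_Form.Matrix_Kernel"
begin

definition A_mat :: "nat \<Rightarrow> nat \<Rightarrow> real mat" where
  "A_mat n k = mat n n (\<lambda>(i, j).
      if i < j \<and> j - i \<le> k then 1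
      else if j < i \<and> i - j \<le> k then -1
      else 0)"

definition N_nat :: "nat \<Rightarrow> nat \<Rightarrow> nat" where
  "N_nat n k = kernel_dim (A_mat n k)"

text \<open>N(n,k) for an arbitrary integer n: N(n',k) for the representative n' > k with
  n' congruent to n modulo k^2+k (the paper shows the choice of n' does not matter);
  we take n' = k + 1 + ((n - k - 1) mod (k^2+k)).\<close>
definition N :: "int \<Rightarrow> nat \<Rightarrow> nat" where
  "N n k = N_nat (k + 1 + nat ((n - int k - 1) mod (int k ^ 2 + int k))) k"

end

theory Submission
  imports Defs
begin


lemma kernel_dim_bridge:
  fixes A :: "real mat" and g :: "nat \<Rightarrow> real vec" and c :: "nat \<Rightarrow> nat \<Rightarrow> real"
  assumes A: "A \<in> carrier_mat nr nc"
  and g: "\<And>i. i < d \<Longrightarrow> g i \<in> mat_kernel A"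
  and fg: "\<And>i j. i < d \<Longrightarrow> j < d \<Longrightarrow> (\<Sum>l<nc. c i l * g j $ l) = (if i = j then 1 else 0)"
  and inj: "\<And>v. v \<in> mat_kernel A \<Longrightarrow> (\<And>i. i < d \<Longrightarrow> (\<Sum>l<nc. c i l * v $ l) = 0) \<Longrightarrow> v = 0\<^sub>v nc"
  shows "kernel_dim A = d"
proof -
  interpret kernel nr nc A by (unfold_locales, rule A)
  define B where "B = g ` {..<d}"
  have injg: "inj_on g {..<d}"
  proof (rule inj_onI)
    fix i j assume i: "i \<in> {..<d}" and j: "j \<in> {..<d}" and e: "g i = g j"
    have "(\<Sum>l<nc. c i l * g i $ l) = (\<Sum>l<nc. c i l * g j $ l)" using e by simp
    thus "i = j" using fg[of i i] fg[of i j] i j by (auto split: if_splits)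
  qed
  have finB: "finite B" unfolding B_def by auto
  have sub: "B \<subseteq> mat_kernel A" unfolding B_def using g by auto
  have cardB: "card B = d" unfolding B_def using card_image[OF injg] by simp
  have carr: "\<And>v. v \<in> mat_kernel A \<Longrightarrow> v \<in> carrier_vec nc" using mat_kernelD(1)[OF A] by blast
  have phi_lc: "(\<Sum>l<nc. c i l * lincomb a B $ l) = (\<Sum>j<d. a (g j) * (\<Sum>l<nc. c i l * g j $ l))" for i a
  proof -
    have "(\<Sum>l<nc. c i l * lincomb a B $ l) = (\<Sum>l<nc. c i l * (\<Sum>b\<in>B. a b * b $ l))"
      by (rule sum.cong[OF refl], subst lincomb_index[OF _ sub], auto)
    also have "\<dots> = (\<Sum>b\<in>B. a b * (\<Sum>l<nc. c i l * b $ l))"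
      by (simp add: sum_distrib_left sum_distrib_right mult_ac, rule sum.swap)
    also have "\<dots> = (\<Sum>j<d. a (g j) * (\<Sum>l<nc. c i l * g j $ l))"
      unfolding B_def by (subst sum.reindex[OF injg], simp)
    finally show ?thesis .
  qed
  have li: "lin_indpt B"
  proof (rule Ker.finite_lin_indpt2[OF finB sub])
    fix a assume "a \<in> B \<rightarrow> UNIV" and lc: "lincomb a B = 0\<^sub>v nc"
    show "\<forall>v\<in>B. a v = 0"
    proof
      fix v assume "v \<in> B"
      then obtain i where i: "i < d" and v: "v = g i" unfolding B_def by auto
      have "(\<Sum>l<nc. c i l * lincomb a B $ l) = 0" using lc by simp
      also have "(\<Sum>l<nc. c i l * lincomb a B $ l) = (\<Sum>j<d. a (g j) * (if i = j then 1 else 0))"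
        unfolding phi_lc using fg i by (intro sum.cong, auto)
      also have "\<dots> = a (g i)" using i by (simp add: if_distrib sum.delta cong: if_cong)
      finally show "a v = 0" using v by simp
    qed
  qed
  have span: "span B = mat_kernel A"
  proof
    show "span B \<subseteq> mat_kernel A" using sub by (rule Ker.span_is_subset2)
    show "mat_kernel A \<subseteq> span B"
    proof
      fix v assume v: "v \<in> mat_kernel A"
      define a where "a = (\<lambda>b. (\<Sum>l<nc. c (SOME i. i < d \<and> g i = b) l * v $ l))"
      have aj: "a (g j) = (\<Sum>l<nc. c j l * v $ l)" if j: "j < d" for j
      proof -
        have "(SOME i. i < d \<and> g i = g j) = j"
          by (rule some_equality, insert j injg, auto simp: inj_on_def)
        thus ?thesis unfolding a_def by simp
      qed
      define u where "u = lincomb a B"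
      have u: "u \<in> mat_kernel A" unfolding u_def by (rule Ker.lincomb_closed[OF sub], auto simp: class_ring_simps)
      have vc: "v \<in> carrier_vec nc" using carr[OF v] .
      have uc: "u \<in> carrier_vec nc" using carr[OF u] .
      have Av: "A *\<^sub>v v = 0\<^sub>v nr" using mat_kernelD(2)[OF A v] .
      have Au: "A *\<^sub>v u = 0\<^sub>v nr" using mat_kernelD(2)[OF A u] .
      have dvu: "v - u \<in> mat_kernel A"
      proof (rule mat_kernelI[OF A])
        show "v - u \<in> carrier_vec nc" using vc uc by auto
        have "A *\<^sub>v (v - u) = A *\<^sub>v v - A *\<^sub>v u" using A vc uc by (simp add: mult_minus_distrib_mat_vec)
        thus "A *\<^sub>v (v - u) = 0\<^sub>v nr" using Av Au by auto
      qed
      have h0: "v - u = 0\<^sub>v nc"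
      proof (rule inj[OF dvu])
        fix i assume i: "i < d"
        have "(\<Sum>l<nc. c i l * (v - u) $ l) = (\<Sum>l<nc. c i l * v $ l) - (\<Sum>l<nc. c i l * u $ l)"
          using vc uc by (simp add: sum_subtractf[symmetric] algebra_simps)
        also have "(\<Sum>l<nc. c i l * u $ l) = (\<Sum>j<d. a (g j) * (if i = j then 1 else 0))"
          unfolding u_def phi_lc using fg i by (intro sum.cong, auto)
        also have "\<dots> = a (g i)" using i by (simp add: if_distrib sum.delta cong: if_cong)
        also have "\<dots> = (\<Sum>l<nc. c i l * v $ l)" using aj[OF i] .
        finally show "(\<Sum>l<nc. c i l * (v - u) $ l) = 0" by simp
      qed
      have "v = u"
      proof (rule eq_vecI)
        show "dim_vec v = dim_vec u" using vc uc by simp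
        fix i assume i: "i < dim_vec u"
        have "(v - u) $ i = 0" using i uc by (simp add: h0)
        thus "v $ i = u $ i" using i by simp
      qed
      thus "v \<in> span B" unfolding u_def Ker.span_def using finB by blast
    qed
  qed
  have "basis B" unfolding Ker.basis_def using li span sub by auto
  from Ker.dim_basis[OF finB this] cardB show ?thesis by simp
qed



definition xz :: "nat \<Rightarrow> real vec \<Rightarrow> nat \<Rightarrow> real" where
  "xz n v j = (if j < n then v $ j else 0)"

definition Wv :: "nat \<Rightarrow> nat \<Rightarrow> real vec \<Rightarrow> nat \<Rightarrow> real" where
  "Wv n k v j = (\<Sum>i\<in>{j-k..j}. xz n v i)"

lemma sum_interval_filter:
  fixes f :: "nat \<Rightarrow> real"
  assumes "s2 < NN"
  shows "(\<Sum>j\<in>{s1..s2}. f j) = (\<Sum>j<NN. if s1 \<le> j \<and> j \<le> s2 then f j else 0)"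
proof -
  have e: "{s1..s2} = {j \<in> {..<NN}. s1 \<le> j \<and> j \<le> s2}" using assms by auto
  have "(\<Sum>j<NN. if s1 \<le> j \<and> j \<le> s2 then f j else 0) = sum f {j \<in> {..<NN}. s1 \<le> j \<and> j \<le> s2}"
    by (rule sum.inter_filter[symmetric]) simp
  thus ?thesis using e by simp
qed

lemma row_formula:
  assumes v: "v \<in> carrier_vec n" and i: "i < n"
  shows "(A_mat n k *\<^sub>v v) $ i = Wv n k v (i+k) - Wv n k v i"
proof -
  define co where "co = (\<lambda>j. if i < j \<and> j - i \<le> k then 1 else if j < i \<and> i - j \<le> k then -1 else (0::real))"
  have "(A_mat n k *\<^sub>v v) $ i = (\<Sum>j<n. co j * v $ j)"
    using v i unfolding A_mat_def co_def
    by (simp add: mult_mat_vec_def scalar_prod_def row_def atLeast0LessThan)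
  also have "\<dots> = (\<Sum>j<n+k. co j * xz n v j)"
    by (rule sum.mono_neutral_cong_left, auto simp: xz_def)
  also have "\<dots> = (\<Sum>j<n+k. (if i \<le> j \<and> j \<le> i+k then xz n v j else 0) - (if i-k \<le> j \<and> j \<le> i then xz n v j else 0))"
    by (rule sum.cong, auto simp: co_def)
  also have "\<dots> = Wv n k v (i+k) - Wv n k v i"
    unfolding Wv_def sum_subtractf using i
    by (simp add: sum_interval_filter[where NN="n+k"])
  finally show ?thesis .
qed

lemma ker_iff:
  assumes v: "v \<in> carrier_vec n"
  shows "v \<in> mat_kernel (A_mat n k) \<longleftrightarrow> (\<forall>i<n. Wv n k v (i+k) = Wv n k v i)"
proof -
  have A: "A_mat n k \<in> carrier_mat n n" unfolding A_mat_def by auto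
  have "v \<in> mat_kernel (A_mat n k) \<longleftrightarrow> A_mat n k *\<^sub>v v = 0\<^sub>v n"
    using mat_kernel[OF A] v by auto
  also have "\<dots> \<longleftrightarrow> (\<forall>i<n. (A_mat n k *\<^sub>v v) $ i = 0)"
  proof
    assume h: "A_mat n k *\<^sub>v v = 0\<^sub>v n"
    show "\<forall>i<n. (A_mat n k *\<^sub>v v) $ i = 0" unfolding h by simp
  next
    assume h: "\<forall>i<n. (A_mat n k *\<^sub>v v) $ i = 0"
    show "A_mat n k *\<^sub>v v = 0\<^sub>v n" by (rule eq_vecI, insert h A, auto)
  qed
  also have "\<dots> \<longleftrightarrow> (\<forall>i<n. Wv n k v (i+k) = Wv n k v i)"
    using row_formula[OF v] by auto
  finally show ?thesis .
qed

lemma Wv_periodic: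
  assumes k: "k \<ge> 1" and per: "\<forall>i<n. Wv n k v (i+k) = Wv n k v i"
  shows "j < n + k \<Longrightarrow> Wv n k v j = Wv n k v (j mod k)"
proof (induction j rule: less_induct)
  case (less j)
  show ?case
  proof (cases "j < k")
    case True thus ?thesis by simp
  next
    case False
    hence "Wv n k v j = Wv n k v (j - k)" using per less.prems by (metis add.commute le_add_diff_inverse not_less less_diff_conv2 add_less_cancel_right)
    also have "\<dots> = Wv n k v ((j - k) mod k)" using less k False by auto
    also have "(j - k) mod k = j mod k" using False by (simp add: le_mod_geq)
    finally show ?thesis .
  qed
qed

lemma Wv_block:
  assumes r: "r \<le> k"
  shows "(\<Sum>t<T+1. Wv n k v (r + t*(k+1))) = (\<Sum>i<r+1+T*(k+1). xz n v i)"
proof (induction T)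
  case 0
  have "{r-k..r} = {..<r+1}" using r by auto
  thus ?case by (simp add: Wv_def)
next
  case (Suc T)
  have "(\<Sum>t<Suc T+1. Wv n k v (r + t*(k+1))) = (\<Sum>t<T+1. Wv n k v (r + t*(k+1))) + Wv n k v (r + (T+1)*(k+1))"
    by simp
  also have "Wv n k v (r + (T+1)*(k+1)) = (\<Sum>i\<in>{r+1+T*(k+1)..<r+1+(Suc T)*(k+1)}. xz n v i)"
  proof -
    have "{r + (T+1)*(k+1) - k..r + (T+1)*(k+1)} = {r+1+T*(k+1)..<r+1+(Suc T)*(k+1)}" by auto
    thus ?thesis unfolding Wv_def by simp
  qed
  also have "(\<Sum>t<T+1. Wv n k v (r + t*(k+1))) = (\<Sum>i\<in>{0..<r+1+T*(k+1)}. xz n v i)"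
    using Suc by (simp add: atLeast0LessThan)
  also have "(\<Sum>i\<in>{0..<r+1+T*(k+1)}. xz n v i) + (\<Sum>i\<in>{r+1+T*(k+1)..<r+1+(Suc T)*(k+1)}. xz n v i)
     = (\<Sum>i\<in>{0..<r+1+(Suc T)*(k+1)}. xz n v i)"
    by (rule sum.atLeastLessThan_concat, auto)
  finally show ?case by (simp add: atLeast0LessThan)
qed

lemma xz_sum_ge:
  assumes "n \<le> NN" shows "(\<Sum>i<NN. xz n v i) = (\<Sum>i<n. xz n v i)"
  using assms by (intro sum.mono_neutral_right, auto simp: xz_def)

lemma functional_Wv:
  assumes "i \<le> k"
  shows "(\<Sum>l<n. (if l \<le> i then 1 else 0) * v $ l) = Wv n k v i"
proof -
  have "{i-k..i} = {..i}" using assms by auto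
  hence "Wv n k v i = (\<Sum>l\<le>i. xz n v l)" unfolding Wv_def by simp
  also have "\<dots> = (\<Sum>l<n+i+1. if l \<le> i then xz n v l else 0)"
    by (subst sum.inter_filter[symmetric], simp, rule sum.cong, auto)
  also have "\<dots> = (\<Sum>l<n. if l \<le> i then xz n v l else 0)"
    by (rule sum.mono_neutral_right, auto simp: xz_def)
  also have "\<dots> = (\<Sum>l<n. (if l \<le> i then 1 else 0) * v $ l)"
    by (rule sum.cong, auto simp: xz_def)
  finally show ?thesis by simp
qed

lemma Wv_zero_imp:
  assumes "\<And>j. j < n \<Longrightarrow> Wv n k v j = 0"
  shows "j < n \<Longrightarrow> xz n v j = 0"
proof (induction j rule: less_induct)
  case (less j)
  have "{j-k..j} = insert j {j-k..<j}" by auto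
  hence "Wv n k v j = xz n v j + (\<Sum>i\<in>{j-k..<j}. xz n v i)" unfolding Wv_def by simp
  also have "(\<Sum>i\<in>{j-k..<j}. xz n v i) = 0" using less by (intro sum.neutral, auto)
  finally show ?case using assms less by simp
qed



lemma tele_mod:
  fixes p :: "nat \<Rightarrow> real"
  shows "(\<Sum>t<T. p ((r+1+t) mod k)) - (\<Sum>t<T. p ((r+t) mod k)) = p ((r+T) mod k) - p (r mod k)"
  by (induction T) (simp_all add: algebra_simps)

locale Par =
  fixes k n m a b e M :: nat
  assumes k1: "k \<ge> 1" and n1: "n \<ge> 1" and b1: "b \<ge> 1" and ab: "a \<le> b"
    and kdef: "k = a + m*b" and edef: "e = a*(m+1)"
    and Ldef: "n + k = M*(k+1) + e" and Mm: "M mod k = m mod k"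
begin

lemma e_le_k: "e \<le> k"
proof -
  have "a*m \<le> b*m" using ab by simp
  thus ?thesis using kdef edef by (simp add: algebra_simps)
qed

lemma m_le_k: "m \<le> k"
proof -
  have "m*1 \<le> m*b" using b1 by (intro mult_le_mono2)
  thus ?thesis using kdef by linarith
qed

lemma k_e: "k = e + m*(b-a)"
proof -
  have "m*(b-a) = m*b - m*a" by (simp add: diff_mult_distrib2)
  moreover have "m*a \<le> m*b" using ab by simp
  ultimately show ?thesis using kdef edef by (simp add: algebra_simps)
qed

lemma M1: "M \<ge> 1"
proof (rule ccontr)
  assume "\<not> M \<ge> 1" hence "M = 0" by simp
  thus False using Ldef n1 e_le_k by simp
qed

lemma e_ge: "a \<ge> 1 \<Longrightarrow> e \<ge> m+1"
proof -
  assume "a \<ge> 1" hence "1*(m+1) \<le> a*(m+1)" by (intro mult_le_mono1)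
  thus ?thesis using edef by simp
qed

lemma a_eq_b: "a = b \<Longrightarrow> e = k"
  using k_e by simp

lemma a_lt_b: "a < b \<Longrightarrow> e + m \<le> k"
proof -
  assume "a < b" hence "b - a \<ge> 1" by simp
  hence "m*(b-a) \<ge> m*1" by (intro mult_le_mono2)
  thus ?thesis using k_e by simp
qed

definition T :: "nat \<Rightarrow> nat" where "T r = M + (if r < e then 1 else 0)"

definition Pf :: "(nat \<Rightarrow> real) \<Rightarrow> nat \<Rightarrow> real" where
  "Pf p r = (\<Sum>t<T r. p ((r+t) mod k))"

definition Rel :: "(nat \<Rightarrow> real) \<Rightarrow> bool" where
  "Rel p \<longleftrightarrow> (\<forall>r. r+1 < e \<longrightarrow> p ((r+m+1) mod k) = p r) \<and> (e \<ge> 1 \<longrightarrow> p (e-1) = 0)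
     \<and> (\<forall>r. e \<le> r \<and> r < k \<longrightarrow> p ((r+m) mod k) = p r)"

lemma modM: "(x + M) mod k = (x + m) mod k"
  by (metis Mm mod_add_right_eq)

lemma Pf_step:
  assumes r: "r < k"
  shows "Pf p (Suc r) - Pf p r = (if r+1 < e then p ((r+m+1) mod k) - p r
       else if r+1 = e then - p r else p ((r+m) mod k) - p r)"
proof -
  have rm: "r mod k = r" using r by simp
  show ?thesis
  proof (cases "r+1 < e")
    case True
    hence "T (Suc r) = M+1" "T r = M+1" unfolding T_def by auto
    hence "Pf p (Suc r) - Pf p r = p ((r+(M+1)) mod k) - p (r mod k)"
      unfolding Pf_def using tele_mod[where p=p and T="M+1" and r=r and k=k] by simp
    also have "(r+(M+1)) mod k = (r+m+1) mod k" using modM[of "r+1"] by (simp add: ac_simps)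
    finally show ?thesis using True rm by simp
  next
    case F1: False
    show ?thesis
    proof (cases "r+1 = e")
      case True
      hence "T (Suc r) = M" "T r = M+1" unfolding T_def by auto
      hence "Pf p (Suc r) - Pf p r = ((\<Sum>t<M. p ((r+1+t) mod k)) - (\<Sum>t<M. p ((r+t) mod k))) - p ((r+M) mod k)"
        unfolding Pf_def by simp
      also have "\<dots> = - p r" using tele_mod[where p=p and T=M and r=r and k=k] rm by simp
      finally show ?thesis using True by simp
    next
      case False
      hence "T (Suc r) = M" "T r = M" using F1 unfolding T_def by auto
      hence "Pf p (Suc r) - Pf p r = p ((r+M) mod k) - p (r mod k)"
        unfolding Pf_def using tele_mod[where p=p and T=M and r=r and k=k] by simp
      also have "(r+M) mod k = (r+m) mod k" using modM[of r] .
      finally show ?thesis using F1 False rm by simp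
    qed
  qed
qed

lemma Rel_iff: "Rel p \<longleftrightarrow> (\<forall>r<k. Pf p (Suc r) = Pf p r)"
proof
  assume R: "Rel p"
  show "\<forall>r<k. Pf p (Suc r) = Pf p r"
  proof (intro allI impI)
    fix r assume r: "r < k"
    have "Pf p (Suc r) - Pf p r = 0"
      using Pf_step[OF r, of p] R r unfolding Rel_def by (auto split: if_splits)
    thus "Pf p (Suc r) = Pf p r" by simp
  qed
next
  assume H: "\<forall>r<k. Pf p (Suc r) = Pf p r"
  have D: "r < k \<Longrightarrow> (if r+1 < e then p ((r+m+1) mod k) - p r
       else if r+1 = e then - p r else p ((r+m) mod k) - p r) = 0" for r
    using Pf_step[of r p] H by simp
  show "Rel p" unfolding Rel_def
  proof (intro conjI allI impI)
    fix r assume "r + 1 < e" thus "p ((r+m+1) mod k) = p r" using D[of r] e_le_k by auto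
  next
    assume "e \<ge> 1" thus "p (e-1) = 0" using D[of "e-1"] e_le_k by auto
  next
    fix r assume "e \<le> r \<and> r < k" thus "p ((r+m) mod k) = p r" using D[of r] by auto
  qed
qed

lemma Pf_const: "Rel p \<Longrightarrow> r \<le> k \<Longrightarrow> Pf p r = Pf p 0"
proof (induction r)
  case (Suc r) thus ?case using Rel_iff by auto
qed simp

end


context Par begin

lemma mod_shift: "s < (m::nat)+1 \<Longrightarrow> (c*(m+1) + s) mod (m+1) = s"
  by (metis add.commute mod_less mod_mult_self1)

lemma zero_nonpath:
  assumes R: "Rel p" and Z: "\<forall>q<m. p q = 0"
  shows "r < k \<Longrightarrow> \<not> (r < e \<and> r mod (m+1) = m) \<Longrightarrow> p r = 0"
proof (induction r rule: less_induct)
  case (less r)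
  have R1: "\<And>r. r+1 < e \<Longrightarrow> p ((r+m+1) mod k) = p r"
   and R3: "\<And>r. e \<le> r \<Longrightarrow> r < k \<Longrightarrow> p ((r+m) mod k) = p r" using R unfolding Rel_def by auto
  show ?case
  proof (cases "r < m")
    case True thus ?thesis using Z by simp
  next
    case nm: False
    show ?thesis
    proof (cases "r < e")
      case True
      with less.prems have rm: "r mod (m+1) \<noteq> m" by auto
      have "r \<noteq> m" using rm by auto
      hence r1: "r \<ge> m+1" using nm by simp
      define r' where "r' = r - (m+1)"
      have rr: "r' + m + 1 = r" using r1 r'_def by simp
      have "p r = p r'" using R1[of r'] rr True less.prems by simp
      also have "p r' = 0"
      proof (rule less.IH)
        show "r' < r" "r' < k" using r'_def r1 less.prems by auto
        have "r' mod (m+1) = r mod (m+1)" using r1 r'_def by (simp add: le_mod_geq)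
        thus "\<not> (r' < e \<and> r' mod (m+1) = m)" using rm by simp
      qed
      finally show ?thesis .
    next
      case ge: False
      show ?thesis
      proof (cases "r < e + m")
        case True
        have a1: "a \<ge> 1"
        proof (rule ccontr)
          assume "\<not> a \<ge> 1" hence "e = 0" using edef by simp
          thus False using True nm by simp
        qed
        have em: "e \<ge> m+1" using e_ge[OF a1] .
        define r' where "r' = r - (m+1)"
        have rr: "r' + m + 1 = r" using em ge r'_def by simp
        have "p r = p r'" using R1[of r'] rr True less.prems by simp
        also have "p r' = 0"
        proof (rule less.IH)
          show "r' < r" "r' < k" using r'_def em ge less.prems by auto
          have "r' = (a-1)*(m+1) + (r - e)" using r'_def edef ge a1 em
            by (simp add: algebra_simps diff_mult_distrib)
          hence "r' mod (m+1) = ((a-1)*(m+1) + (r - e)) mod (m+1)" by simp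
          also have "\<dots> = r - e" using True ge by (intro mod_shift) auto
          finally have "r' mod (m+1) = r - e" .
          thus "\<not> (r' < e \<and> r' mod (m+1) = m)" using True ge by arith
        qed
        finally show ?thesis .
      next
        case False
        have m1: "m \<ge> 1"
        proof (rule ccontr)
          assume "\<not> m \<ge> 1" hence "m = 0" by simp
          hence "e = k" using kdef edef by simp
          thus False using ge less.prems by simp
        qed
        define r' where "r' = r - m"
        have "p r = p r'" using R3[of r'] r'_def False less.prems by simp
        also have "p r' = 0"
          by (rule less.IH, insert r'_def False m1 less.prems, auto)
        finally show ?thesis .
      qed
    qed
  qed
qed

lemma zero_path:
  assumes R: "Rel p"
  shows "r < e \<Longrightarrow> r mod (m+1) = m \<Longrightarrow> p r = 0"
proof (induction "e - r" arbitrary: r rule: less_induct)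
  case less
  have R1: "\<And>r. r+1 < e \<Longrightarrow> p ((r+m+1) mod k) = p r"
   and R2: "e \<ge> 1 \<Longrightarrow> p (e-1) = 0" using R unfolding Rel_def by auto
  show ?case
  proof (cases "r = e - 1")
    case True thus ?thesis using R2 less.prems by simp
  next
    case False
    define q where "q = r div (m+1)"
    have rq: "r = q*(m+1) + m" using less.prems(2) q_def by (metis div_mult_mod_eq)
    have qa: "q < a"
    proof (rule ccontr)
      assume "\<not> q < a" hence "a*(m+1) \<le> q*(m+1)" by (intro mult_le_mono1) simp
      thus False using rq less.prems edef by simp
    qed
    have qa2: "q + 1 < a"
    proof (rule ccontr)
      assume "\<not> q + 1 < a" hence "a = q + 1" using qa by simp
      hence "e = q*(m+1) + m + 1" using edef by simp
      thus False using False rq by simp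
    qed
    have "(q+2)*(m+1) \<le> a*(m+1)" using qa2 by (intro mult_le_mono1) simp
    hence lt: "r + m + 1 < e" using rq edef by (simp add: algebra_simps)
    have "p r = p ((r+m+1) mod k)" using R1[of r] lt by simp
    also have "(r+m+1) mod k = r+m+1" using lt e_le_k by simp
    also have "p (r+m+1) = 0"
    proof (rule less.hyps)
      show "e - (r+m+1) < e - r" using lt by simp
      show "r+m+1 < e" by (rule lt)
      show "(r+m+1) mod (m+1) = m" using less.prems(2) by (metis add.assoc mod_add_self2)
    qed
    finally show ?thesis .
  qed
qed

lemma zero_all:
  assumes R: "Rel p" and Z: "\<forall>q<m. p q = 0" and r: "r < k"
  shows "p r = 0"
  using zero_nonpath[OF R Z r] zero_path[OF R] by blast

definition pq :: "nat \<Rightarrow> nat \<Rightarrow> real" where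
  "pq q r = (if r < k \<and> (if r < e then r mod (m+1) = q else (r - e) mod m = q) then 1 else 0)"

lemma pq_small: "i < m \<Longrightarrow> pq q i = (if i = q then 1 else 0)"
proof -
  assume i: "i < m"
  have ik: "i < k" using i m_le_k by simp
  show ?thesis
  proof (cases "i < e")
    case True thus ?thesis using i ik unfolding pq_def by simp
  next
    case False
    have "e = 0"
    proof (rule ccontr)
      assume "e \<noteq> 0" hence "a \<ge> 1" using edef by (cases a) auto
      thus False using e_ge False i by simp
    qed
    thus ?thesis using i ik unfolding pq_def by simp
  qed
qed

end


context Par begin

lemma pq_Rel:
  assumes q: "q < m"
  shows "Rel (pq q)"
  unfolding Rel_def
proof (intro conjI allI impI)
  have m1: "m \<ge> 1" using q by simp
  {
    assume e1: "e \<ge> 1"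
    hence a1: "a \<ge> 1" using edef by (cases a) auto
    have "e - 1 = (a-1)*(m+1) + m" using edef a1 by (cases a) (auto simp: algebra_simps)
    hence "(e-1) mod (m+1) = m" using mod_shift[of m "a-1"] by simp
    thus "pq q (e-1) = 0" unfolding pq_def using e1 q by auto
  }
  {
    fix r assume r: "r + 1 < e"
    define s where "s = r + m + 1"
    have a1: "a \<ge> 1" using r edef by (cases a) auto
    show "pq q ((r+m+1) mod k) = pq q r"
    proof (cases "s < e")
      case True
      have "s mod (m+1) = r mod (m+1)" unfolding s_def by (metis add.assoc mod_add_self2)
      thus ?thesis using True r e_le_k unfolding pq_def s_def[symmetric] by simp
    next
      case F1: False
      show ?thesis
      proof (cases "s < k")
        case True
        have em: "e \<ge> m+1" using e_ge[OF a1] .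
        have "r = (a-1)*(m+1) + (s - e)" using s_def edef a1 F1 r em
          by (cases a) (auto simp: algebra_simps)
        hence "r mod (m+1) = ((a-1)*(m+1) + (s - e)) mod (m+1)" by simp
        also have "\<dots> = s - e" using r s_def by (intro mod_shift) auto
        finally have rm: "r mod (m+1) = s - e" .
        have sm: "(s - e) mod m = s - e" using r s_def m1 by (intro mod_less) auto
        show ?thesis using True F1 r e_le_k rm sm unfolding pq_def s_def[symmetric] by simp
      next
        case False
        have abq: "a = b"
        proof (rule ccontr)
          assume "a \<noteq> b" hence "a < b" using ab by simp
          from a_lt_b[OF this] show False using False r s_def by simp
        qed
        have ek: "e = k" using a_eq_b[OF abq] .
        have kb: "k = b*(m+1)" using kdef abq by (simp add: algebra_simps)
        have sk: "s - k < m + 1" using s_def r ek by simp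
        have mk: "1*(m+1) \<le> b*(m+1)" using b1 by (intro mult_le_mono1)
        have smod: "s mod k = s - k"
        proof -
          have "s mod k = (s - k) mod k" using False by (simp add: le_mod_geq)
          also have "\<dots> = s - k" using sk mk kb by (intro mod_less) simp
          finally show ?thesis .
        qed
        have "s = b*(m+1) + (s - k)" using kb False by simp
        hence "s mod (m+1) = (s-k) mod (m+1)" by (metis mod_mult_self3)
        moreover have "s mod (m+1) = r mod (m+1)" unfolding s_def by (metis add.assoc mod_add_self2)
        ultimately have "(s-k) mod (m+1) = r mod (m+1)" by simp
        moreover have "s - k < e" using sk ek kb abq a1 e_ge by simp
        ultimately show ?thesis using r ek smod unfolding pq_def s_def[symmetric] by simp
      qed
    qed
  }
  {
    fix r assume r: "e \<le> r \<and> r < k"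
    have alb: "a < b"
    proof (rule ccontr)
      assume "\<not> a < b" hence "a = b" using ab by simp
      thus False using a_eq_b r by simp
    qed
    show "pq q ((r+m) mod k) = pq q r"
    proof (cases "r + m < k")
      case True
      have "(r + m - e) mod m = (r - e) mod m" using r
        by (metis Nat.add_diff_assoc2 mod_add_self2)
      thus ?thesis using True r unfolding pq_def by simp
    next
      case False
      define s where "s = r + m - k"
      have sm: "s < m" using s_def r m1 by arith
      have smod: "(r+m) mod k = s"
      proof -
        have "(r+m) mod k = (r + m - k) mod k" using False by (simp add: le_mod_geq)
        also have "\<dots> = s" unfolding s_def using r m_le_k by (intro mod_less) arith
        finally show ?thesis .
      qed
      have ps: "pq q s = (if s = q then 1 else 0)" using pq_small[OF sm] .
      have "r - e = s + m*(b-a-1)"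
      proof -
        have "m*(b-a) = m*(b-a-1) + m" using alb by (cases "b-a") (auto simp: algebra_simps)
        thus ?thesis using k_e s_def r False by simp
      qed
      hence rem: "(r - e) mod m = s" using sm by simp
      have "pq q r = (if s = q then 1 else 0)"
      proof -
        have "\<not> r < e" using r by simp
        thus ?thesis unfolding pq_def using r rem by (simp only: if_False) simp
      qed
      thus ?thesis using ps smod by simp
    qed
  }
qed

end


context Par begin

definition wf :: "(nat \<Rightarrow> real) \<Rightarrow> nat \<Rightarrow> real" where "wf p j = p (j mod k)"

definition Fz :: "(nat \<Rightarrow> real) \<Rightarrow> nat \<Rightarrow> real" where
  "Fz p j = (\<Sum>t\<le>j div (k+1). wf p (j mod (k+1) + t*(k+1)))"

definition xv :: "(nat \<Rightarrow> real) \<Rightarrow> nat \<Rightarrow> real" where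
  "xv p j = Fz p j - (if j = 0 then 0 else Fz p (j-1))"

definition gv :: "(nat \<Rightarrow> real) \<Rightarrow> real vec" where "gv p = vec n (xv p)"

lemma Fz_rec: "Fz p j = wf p j + (if j \<ge> k+1 then Fz p (j - (k+1)) else 0)"
proof (cases "j \<ge> k+1")
  case False thus ?thesis unfolding Fz_def by simp
next
  case True
  define j' where "j' = j - (k+1)"
  have jj: "j = j' + (k+1)" using True j'_def by simp
  have d: "j div (k+1) = Suc (j' div (k+1))" using jj div_add_self2[of "k+1" j'] by simp
  have mo: "j mod (k+1) = j' mod (k+1)" using jj mod_add_self2[of j' "k+1"] by simp
  have "Fz p j = Fz p j' + wf p (j' mod (k+1) + Suc (j' div (k+1))*(k+1))"
    unfolding Fz_def d mo by simp
  also have "j' mod (k+1) + Suc (j' div (k+1))*(k+1) = (j' div (k+1) * (k+1) + j' mod (k+1)) + (k+1)"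
    by (simp add: algebra_simps)
  also have "\<dots> = j" using jj div_mult_mod_eq[of j' "k+1"] by simp
  finally show ?thesis using True j'_def by simp
qed

lemma xv_tele: "(\<Sum>i\<in>{s1..s1+d}. xv p i) = Fz p (s1+d) - (if s1 = 0 then 0 else Fz p (s1-1))"
  by (induction d) (auto simp: xv_def)

lemma xv_conv: "(\<Sum>i\<in>{j-k..j}. xv p i) = wf p j"
proof -
  have "(\<Sum>i\<in>{j-k..j}. xv p i) = (\<Sum>i\<in>{(j-k)..(j-k) + (j - (j-k))}. xv p i)" by simp
  also have "\<dots> = Fz p j - (if j - k = 0 then 0 else Fz p (j-k-1))"
    unfolding xv_tele by simp
  also have "\<dots> = wf p j"
  proof (cases "j \<ge> k+1")
    case True thus ?thesis using Fz_rec[of p j] by simp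
  next
    case False thus ?thesis using Fz_rec[of p j] by simp
  qed
  finally show ?thesis .
qed

lemma wf_shift: "wf p (r + t*(k+1)) = p ((r+t) mod k)"
proof -
  have "r + t*(k+1) = (r+t) + t*k" by (simp add: algebra_simps)
  thus ?thesis unfolding wf_def by (metis mod_mult_self1)
qed

lemma div_T:
  assumes j1: "n - 1 \<le> j" and j2: "j < n + k"
  shows "j div (k+1) + 1 = T (j mod (k+1))"
proof -
  define D where "D = j div (k+1)"
  define r where "r = j mod (k+1)"
  have jd: "j = D*(k+1) + r" unfolding D_def r_def by (metis div_mult_mod_eq)
  have rk: "r \<le> k" unfolding r_def by (metis less_Suc_eq_le mod_less_divisor zero_less_Suc Suc_eq_plus1)
  have L1: "(M-1)*(k+1) + e \<le> j" using j1 Ldef M1 by (cases M) (auto simp: algebra_simps)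
  have L2: "j < M*(k+1) + e" using j2 Ldef by simp
  show ?thesis
  proof (cases "r < e")
    case True
    have "D*(k+1) < (M+1)*(k+1)" using L2 jd e_le_k by (simp add: algebra_simps)
    hence a1: "D < M+1" by (meson mult_less_cancel2)
    have "(M-1)*(k+1) < D*(k+1)" using L1 jd True by simp
    hence a2: "M - 1 < D" by (meson mult_less_cancel2)
    have "D = M" using a1 a2 M1 by simp
    thus ?thesis unfolding T_def using True D_def r_def by simp
  next
    case False
    have "D*(k+1) < M*(k+1)" using L2 jd False by simp
    hence a1: "D < M" by (meson mult_less_cancel2)
    have "(M-1)*(k+1) < (D+1)*(k+1)" using L1 jd rk e_le_k by (simp add: algebra_simps)
    hence a2: "M - 1 < D + 1" by (meson mult_less_cancel2)
    have "D + 1 = M" using a1 a2 by simp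
    thus ?thesis unfolding T_def using False D_def r_def by simp
  qed
qed

lemma Fz_fold:
  assumes j1: "n - 1 \<le> j" and j2: "j < n + k"
  shows "Fz p j = Pf p (j mod (k+1))"
proof -
  have "Fz p j = (\<Sum>t<j div (k+1) + 1. wf p (j mod (k+1) + t*(k+1)))"
    unfolding Fz_def by (rule sum.cong) auto
  also have "\<dots> = (\<Sum>t<T (j mod (k+1)). p ((j mod (k+1) + t) mod k))"
    unfolding div_T[OF j1 j2] wf_shift ..
  finally show ?thesis unfolding Pf_def .
qed

lemma mod_le_k: "j mod (k+1) \<le> k"
  by (metis less_Suc_eq_le mod_less_divisor zero_less_Suc Suc_eq_plus1)

lemma xv_zero:
  assumes R: "Rel p" and j1: "n \<le> j" and j2: "j < n + k"
  shows "xv p j = 0"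
proof -
  have "j \<noteq> 0" using j1 n1 by simp
  hence "xv p j = Fz p j - Fz p (j-1)" unfolding xv_def by simp
  also have "\<dots> = Pf p (j mod (k+1)) - Pf p ((j-1) mod (k+1))"
    using Fz_fold[of j p] Fz_fold[of "j-1" p] j1 j2 by simp
  also have "\<dots> = 0" using Pf_const[OF R mod_le_k] Pf_const[OF R mod_le_k] by simp
  finally show ?thesis .
qed

lemma gv_W:
  assumes R: "Rel p" and j: "j < n + k"
  shows "Wv n k (gv p) j = wf p j"
proof -
  have "Wv n k (gv p) j = (\<Sum>i\<in>{j-k..j}. xv p i)"
    unfolding Wv_def
  proof (rule sum.cong[OF refl])
    fix i assume "i \<in> {j-k..j}"
    hence i: "i < n + k" using j by simp
    show "xz n (gv p) i = xv p i"
      using xv_zero[OF R _ i] unfolding xz_def gv_def by auto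
  qed
  also have "\<dots> = wf p j" by (rule xv_conv)
  finally show ?thesis .
qed

lemma gv_carrier: "gv p \<in> carrier_vec n" unfolding gv_def by simp

lemma gv_ker:
  assumes R: "Rel p"
  shows "gv p \<in> mat_kernel (A_mat n k)"
  unfolding ker_iff[OF gv_carrier]
proof (intro allI impI)
  fix i assume i: "i < n"
  have "Wv n k (gv p) (i+k) = wf p (i+k)" using gv_W[OF R] i by simp
  also have "\<dots> = wf p i" unfolding wf_def by simp
  also have "\<dots> = Wv n k (gv p) i" using gv_W[OF R] i by simp
  finally show "Wv n k (gv p) (i+k) = Wv n k (gv p) i" .
qed

lemma upper:
  assumes v: "v \<in> mat_kernel (A_mat n k)"
    and Z: "\<And>i. i < m \<Longrightarrow> (\<Sum>l<n. (if l \<le> i then 1 else 0) * v $ l) = 0"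
  shows "v = 0\<^sub>v n"
proof -
  have A: "A_mat n k \<in> carrier_mat n n" unfolding A_mat_def by auto
  have vc: "v \<in> carrier_vec n" using mat_kernelD(1)[OF A v] .
  have per: "\<forall>i<n. Wv n k v (i+k) = Wv n k v i" using ker_iff[OF vc] v by simp
  define p where "p = (\<lambda>r. Wv n k v r)"
  have pj: "j < n + k \<Longrightarrow> Wv n k v j = p (j mod k)" for j
    unfolding p_def using Wv_periodic[OF k1 per] by simp
  have Pfx: "Pf p r = (\<Sum>i<n. xz n v i)" if r: "r \<le> k" for r
  proof -
    have inr: "r + t*(k+1) < n + k" if t: "t < T r" for t
    proof (cases "t < M")
      case True
      have "(t+1)*(k+1) \<le> M*(k+1)" using True by (intro mult_le_mono1) simp
      thus ?thesis using r Ldef by (simp add: algebra_simps)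
    next
      case False
      hence "t = M" "r < e" using t unfolding T_def by (auto split: if_splits)
      thus ?thesis using Ldef by simp
    qed
    have T1: "T r = (T r - 1) + 1" using M1 unfolding T_def by simp
    have "Pf p r = (\<Sum>t<T r. Wv n k v (r + t*(k+1)))"
      unfolding Pf_def
    proof (rule sum.cong[OF refl])
      fix t assume "t \<in> {..<T r}"
      hence "Wv n k v (r + t*(k+1)) = p ((r + t*(k+1)) mod k)" using pj inr by simp
      also have "(r + t*(k+1)) mod k = (r + t) mod k"
      proof -
        have "r + t*(k+1) = (r+t) + t*k" by (simp add: algebra_simps)
        thus ?thesis by (metis mod_mult_self1)
      qed
      finally show "p ((r+t) mod k) = Wv n k v (r + t*(k+1))" by simp
    qed
    also have "\<dots> = (\<Sum>t<(T r - 1) + 1. Wv n k v (r + t*(k+1)))" using T1 by simp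
    also have "\<dots> = (\<Sum>i<r+1+(T r - 1)*(k+1). xz n v i)" by (rule Wv_block[OF r])
    also have "\<dots> = (\<Sum>i<n. xz n v i)"
    proof (rule xz_sum_ge)
      show "n \<le> r+1+(T r - 1)*(k+1)"
      proof (cases "r < e")
        case True
        hence "T r - 1 = M" unfolding T_def by simp
        thus ?thesis using Ldef e_le_k by simp
      next
        case False
        hence "T r - 1 = M - 1" unfolding T_def by simp
        moreover have "(M-1)*(k+1) + (k+1) = M*(k+1)" using M1 by (cases M) auto
        ultimately show ?thesis using Ldef False by simp
      qed
    qed
    finally show ?thesis .
  qed
  have R: "Rel p" unfolding Rel_iff using Pfx by simp
  have Zp: "\<forall>q<m. p q = 0"
  proof (intro allI impI)
    fix q assume q: "q < m"
    have "p q = Wv n k v q" unfolding p_def ..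
    also have "\<dots> = 0" using functional_Wv[where i=q and k=k and n=n and v=v] Z[OF q] q m_le_k by simp
    finally show "p q = 0" .
  qed
  have W0: "Wv n k v j = 0" if j: "j < n" for j
  proof -
    have "Wv n k v j = p (j mod k)" using pj j by simp
    also have "\<dots> = 0" using zero_all[OF R Zp] k1 by simp
    finally show ?thesis .
  qed
  show ?thesis
  proof (rule eq_vecI)
    show "dim_vec v = dim_vec (0\<^sub>v n)" using vc by simp
    fix i assume "i < dim_vec (0\<^sub>v n)"
    hence i: "i < n" by simp
    have "xz n v i = 0" using Wv_zero_imp[of n k v i] W0 i by blast
    thus "v $ i = 0\<^sub>v n $ i" using i unfolding xz_def by simp
  qed
qed

theorem core: "kernel_dim (A_mat n k) = m"
proof (rule kernel_dim_bridge[where g="\<lambda>q. gv (pq q)" and c="\<lambda>i l. if l \<le> i then 1 else 0"])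
  show "A_mat n k \<in> carrier_mat n n" unfolding A_mat_def by auto
  show "\<And>i. i < m \<Longrightarrow> gv (pq i) \<in> mat_kernel (A_mat n k)"
    using gv_ker pq_Rel by blast
  show "(\<Sum>l<n. (if l \<le> i then 1 else 0) * gv (pq j) $ l) = (if i = j then 1 else 0)"
    if i: "i < m" and j: "j < m" for i j
  proof -
    have ik: "i < k" using i m_le_k by simp
    have "(\<Sum>l<n. (if l \<le> i then 1 else 0) * gv (pq j) $ l) = Wv n k (gv (pq j)) i"
      using functional_Wv[where i=i and k=k and n=n] ik by simp
    also have "\<dots> = wf (pq j) i" using gv_W[OF pq_Rel[OF j]] ik by simp
    also have "\<dots> = pq j i" unfolding wf_def using ik by simp
    also have "\<dots> = (if i = j then 1 else 0)" using pq_small[OF i] .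
    finally show ?thesis .
  qed
  show "\<And>v. v \<in> mat_kernel (A_mat n k) \<Longrightarrow>
         (\<And>i. i < m \<Longrightarrow> (\<Sum>l<n. (if l \<le> i then 1 else 0) * v $ l) = 0) \<Longrightarrow> v = 0\<^sub>v n"
    by (rule upper)
qed

end


theorem theorem8p10:
  fixes k :: nat and a b :: int
  assumes "k \<ge> 1" and "b \<ge> 1" and "0 \<le> a" and "a \<le> b"
    and "int k mod b = a mod b"
  shows "int (N ((int k + 1 + a - b) * (int k - a) div b) k) = (int k - a) div b"
proof -
  have k1: "k \<ge> 1" and b1: "b \<ge> 1" and a0: "0 \<le> a" and ab: "a \<le> b" and km: "int k mod b = a mod b"
    using assms by auto
  have dvd: "b dvd (int k - a)" using km by (simp add: mod_eq_dvd_iff)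
  define mi where "mi = (int k - a) div b"
  have kmi: "int k - a = b * mi" unfolding mi_def using dvd by simp
  have ka: "a \<le> int k"
  proof (cases "a < b")
    case True
    hence "a mod b = a" using a0 by simp
    hence "int k mod b = a" using km by simp
    moreover have "int k mod b \<le> int k" using b1 by (simp add: zmod_le_nonneg_dividend)
    ultimately show ?thesis by simp
  next
    case False
    hence abq: "a = b" using ab by simp
    hence "b dvd int k" using km by (simp add: dvd_eq_mod_eq_0)
    then obtain c where c: "int k = b * c" by (auto elim: dvdE)
    have "c \<ge> 1"
    proof (rule ccontr)
      assume "\<not> c \<ge> 1" hence "c \<le> 0" by simp
      hence "b * c \<le> 0" using b1 by (simp add: mult_nonneg_nonpos)
      thus False using c k1 by simp
    qed
    hence "b * 1 \<le> b * c" using b1 by (intro mult_left_mono) auto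
    thus ?thesis using c abq by simp
  qed
  have mi0: "mi \<ge> 0"
  proof (rule ccontr)
    assume "\<not> mi \<ge> 0" hence "b * mi < 0" using b1 by (simp add: mult_pos_neg)
    thus False using kmi ka by simp
  qed
  define nI where "nI = (int k + 1 + a - b) * (int k - a) div b"
  have nI: "nI = (int k + 1 + a - b) * mi"
    unfolding nI_def kmi using b1 by simp
  have rhs: "(int k - a) div b = mi" unfolding mi_def ..
  define e where "e = a * (mi + 1)"
  have nIk: "nI + int k = mi * (int k + 1) + e"
    unfolding nI e_def using kmi by (simp add: algebra_simps)
  have ami: "a * mi \<le> b * mi" using ab mi0 by (simp add: mult_right_mono)
  have e_le: "e \<le> int k" unfolding e_def using ami kmi by (simp add: algebra_simps)
  have mik: "mi \<le> int k"
  proof -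
    have "mi * 1 \<le> mi * b" using b1 mi0 by (intro mult_left_mono) auto
    thus ?thesis using kmi a0 by (simp add: algebra_simps)
  qed
  define Q where "Q = int k ^ 2 + int k"
  have Qpos: "Q > 0" unfolding Q_def using k1 by (simp add: add_nonneg_pos)
  define X where "X = nI - int k - 1"
  have "mi * (int k + 1) \<le> int k * (int k + 1)" using mik k1 by (intro mult_right_mono) auto
  hence XQ: "X < Q" unfolding X_def Q_def using nIk e_le by (simp add: power2_eq_square algebra_simps)
  have Xd: "X div Q \<le> 0"
  proof (rule ccontr)
    assume "\<not> X div Q \<le> 0"
    hence "X div Q \<ge> 1" by simp
    hence "Q * 1 \<le> Q * (X div Q)" using Qpos by (intro mult_left_mono) auto
    moreover have "Q * (X div Q) \<le> X"
    proof -
      have h1: "X div Q * Q + X mod Q = X" by (rule div_mult_mod_eq)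
      have h2: "X mod Q \<ge> 0" using Qpos by simp
      have "Q * (X div Q) = X div Q * Q" by (rule mult.commute)
      thus ?thesis using h1 h2 by linarith
    qed
    ultimately show False using XQ by simp
  qed
  define dl where "dl = - (X div Q)"
  have dl0: "dl \<ge> 0" unfolding dl_def using Xd by simp
  have Xm: "X mod Q = X + Q * dl" unfolding dl_def by (simp add: minus_div_mult_eq_mod[symmetric] algebra_simps)
  define n' where "n' = k + 1 + nat (X mod Q)"
  have Nval: "N nI k = kernel_dim (A_mat n' k)"
    unfolding N_def N_nat_def n'_def X_def Q_def by simp
  define m where "m = nat mi"
  define a' where "a' = nat a"
  define b' where "b' = nat b"
  define M where "M = m + nat dl * k"
  define e' where "e' = a' * (m+1)"
  have Xmod0: "X mod Q \<ge> 0" using Qpos by simp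
  have "int (n' + k) = int (M*(k+1) + e')"
  proof -
    have "int (n' + k) = int k + 1 + X mod Q + int k" unfolding n'_def using Xmod0 by simp
    also have "\<dots> = mi * (int k + 1) + e + Q * dl" unfolding Xm using nIk X_def by simp
    also have "\<dots> = int (M*(k+1) + e')"
      unfolding M_def e'_def m_def a'_def e_def Q_def using mi0 a0 dl0
      by (simp add: algebra_simps power2_eq_square)
    finally show ?thesis .
  qed
  hence L: "n' + k = M*(k+1) + e'" by (simp only: of_nat_eq_iff)
  have kdef: "k = a' + m*b'"
  proof -
    have "int k = a + b * mi" using kmi by simp
    thus ?thesis unfolding a'_def m_def b'_def using a0 mi0 b1
      by (metis (no_types, lifting) int_nat_eq nat_int nat_mult_distrib nat_add_distrib mult.commute zero_le_mult_iff order_trans zero_le_one)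
  qed
  interpret Par k n' m a' b' e' M
  proof
    show "1 \<le> k" by (rule k1)
    show "1 \<le> n'" unfolding n'_def by simp
    show "1 \<le> b'" unfolding b'_def using b1 by simp
    show "a' \<le> b'" unfolding a'_def b'_def using ab by simp
    show "k = a' + m * b'" by (rule kdef)
    show "e' = a' * (m + 1)" unfolding e'_def ..
    show "n' + k = M * (k + 1) + e'" by (rule L)
    show "M mod k = m mod k" unfolding M_def by simp
  qed
  have "int (N nI k) = int m" using Nval core by simp
  also have "\<dots> = (int k - a) div b" unfolding m_def rhs using mi0 by simp
  finally show ?thesis unfolding nI_def .
qed


end
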